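(* Let $k\ge 1$ and $1\le m\le k$, and let $v_0,\pi_1,v_1,\dots,\pi_k$ be generated by Approximate Value Iteration with errors $\epsilon_1,\dots,\epsilon_{k-1}$ (for any choice of greedy policies). Let $\epsilon=\max_{1\le j<k}\operatorname{span}(\epsilon_j)$ (with $\epsilon=0$ if $k=1$). Let $\pi_{k,m}$ be the periodic non-stationary policy $\pi_k\,\pi_{k-1}\cdots\pi_{k-m+1}\,\pi_k\,\pi_{k-1}\cdots\pi_{k-m+1}\cdots$. Then $$\|v_*-v_{\pi_{k,m}}\|_\infty \le \frac{1}{1-\gamma^m}\left(\frac{\gamma-\gamma^k}{1-\gamma}\,\epsilon+\gamma^k\operatorname{span}(v_*-v_0)\right).$$
   Context: A Markov Decision Process with finite state space $S$, finite action space $A$, reward function $r(s,a)$, transition probabilities $p(s'|s,a)$ and discount factor $\gamma\in[0,1)$. For a (deterministic, stationary) policy $\pi:S\to A$, let $r_\pi(s)=r(s,\pi(s))$, let $P_\pi$ be the stochastic matrix $P_\pi(s,s')=p(s'|s,\pi(s))$, and let $T_\pi v=r_\pi+\gamma P_\pi v$ be the Bellman operator of $\pi$; $v_\pi$ is its unique fixed point (the expected $\gamma$-discounted total reward of $\pi$). The Bellman optimality operator is $Tv=\max_\pi T_\pi v$ (componentwise), $v_*$ is its fixed point (the optimal value), and a policy $\pi$ is greedy with respect to $v$ if $T_\pi v=Tv$. For a function $f:S\to\mathbb R$, $\operatorname{span}(f)=\max_s f(s)-\min_s f(s)$. Approximate Value Iteration: starting from an arbitrary $v_0:S\to\mathbb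 R$, for $j\ge 0$ pick any policy $\pi_{j+1}$ greedy with respect to $v_j$ and set $v_{j+1}=T_{\pi_{j+1}}v_j+\epsilon_{j+1}$, where $\epsilon_{j+1}:S\to\mathbb R$ are arbitrary error terms. A non-stationary policy $\sigma_0\sigma_1\sigma_2\cdots$ uses policy $\sigma_t$ at time $t$; its value is the expected $\gamma$-discounted total reward $v=\sum_{t\ge0}\gamma^t P_{\sigma_0}\cdots P_{\sigma_{t-1}} r_{\sigma_t}$. For the periodic policy $\pi_{k,m}$ this value satisfies $v_{\pi_{k,m}}=T_{\pi_k}T_{\pi_{k-1}}\cdots T_{\pi_{k-m+1}}v_{\pi_{k,m}}$. *)

theory Defs
  imports "HOL-Analysis.Analysis"
begin

definition is_mdp :: "('s::finite \<Rightarrow> 'a::finite \<Rightarrow> 's \<Rightarrow> real) \<Rightarrow> real \<Rightarrow> bool" where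
  "is_mdp p g \<longleftrightarrow> (\<forall>s a s'. 0 \<le> p s a s') \<and> (\<forall>s a. (\<Sum>s'\<in>UNIV. p s a s') = 1)
     \<and> 0 \<le> g \<and> g < 1"

definition T_pol :: "('s::finite \<Rightarrow> 'a \<Rightarrow> real) \<Rightarrow> ('s \<Rightarrow> 'a \<Rightarrow> 's \<Rightarrow> real) \<Rightarrow> real
    \<Rightarrow> ('s \<Rightarrow> 'a) \<Rightarrow> ('s \<Rightarrow> real) \<Rightarrow> 's \<Rightarrow> real" where
  "T_pol r p g pol v s = r s (pol s) + g * (\<Sum>s'\<in>UNIV. p s (pol s) s' * v s')"

definition T_opt :: "('s::finite \<Rightarrow> 'a::finite \<Rightarrow> real) \<Rightarrow> ('s \<Rightarrow> 'a \<Rightarrow> 's \<Rightarrow> real) \<Rightarrow> real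
    \<Rightarrow> ('s \<Rightarrow> real) \<Rightarrow> 's \<Rightarrow> real" where
  "T_opt r p g v s = Max {T_pol r p g pol v s | pol. True}"

definition greedy :: "('s::finite \<Rightarrow> 'a::finite \<Rightarrow> real) \<Rightarrow> ('s \<Rightarrow> 'a \<Rightarrow> 's \<Rightarrow> real) \<Rightarrow> real
    \<Rightarrow> ('s \<Rightarrow> 'a) \<Rightarrow> ('s \<Rightarrow> real) \<Rightarrow> bool" where
  "greedy r p g pol v \<longleftrightarrow> T_pol r p g pol v = T_opt r p g v"

text \<open>Product P_{sg 0} ... P_{sg (t-1)} of transition matrices.\<close>
fun prodP :: "('s::finite \<Rightarrow> 'a \<Rightarrow> 's \<Rightarrow> real) \<Rightarrow> (nat \<Rightarrow> 's \<Rightarrow> 'a) \<Rightarrow> nat \<Rightarrow> 's \<Rightarrow> 's \<Rightarrow> real" where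
  "prodP p sg 0 s s' = (if s = s' then 1 else 0)"
| "prodP p sg (Suc t) s s'' = (\<Sum>s'\<in>UNIV. prodP p sg t s s' * p s' (sg t s') s'')"

definition value_ns :: "('s::finite \<Rightarrow> 'a \<Rightarrow> real) \<Rightarrow> ('s \<Rightarrow> 'a \<Rightarrow> 's \<Rightarrow> real) \<Rightarrow> real
    \<Rightarrow> (nat \<Rightarrow> 's \<Rightarrow> 'a) \<Rightarrow> 's \<Rightarrow> real" where
  "value_ns r p g sg s = (\<Sum>t. g ^ t * (\<Sum>s'\<in>UNIV. prodP p sg t s s' * r s' (sg t s')))"

definition span :: "('s::finite \<Rightarrow> real) \<Rightarrow> real" where
  "span f = Max (range f) - Min (range f)"

definition supnorm :: "('s::finite \<Rightarrow> real) \<Rightarrow> real" where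
  "supnorm f = Max (range (\<lambda>s. \<bar>f s\<bar>))"

definition periodic_pol :: "(nat \<Rightarrow> 's \<Rightarrow> 'a) \<Rightarrow> nat \<Rightarrow> nat \<Rightarrow> nat \<Rightarrow> 's \<Rightarrow> 'a" where
  "periodic_pol pol k m t = pol (k - t mod m)"

end

theory Submission
  imports Defs
begin

lemma maxr_ge: "f s \<le> Max (range (f::'s::finite \<Rightarrow> real))"
  by (simp add: Max_ge)
lemma maxr_le: "(\<And>s. f s \<le> c) \<Longrightarrow> Max (range (f::'s::finite \<Rightarrow> real)) \<le> c"
  by (simp add: Max_le_iff)
lemma minr_le: "Min (range (f::'s::finite \<Rightarrow> real)) \<le> f s"
  by (simp add: Min_le)
lemma minr_ge: "(\<And>s. c \<le> f s) \<Longrightarrow> c \<le> Min (range (f::'s::finite \<Rightarrow> real))"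
  by (simp add: Min_ge_iff)

lemma stoch_le:
  assumes "\<And>s'. 0 \<le> q s'" "(\<Sum>s'\<in>UNIV. q s') = 1"
  shows "(\<Sum>s'\<in>UNIV. q s' * (f::'s::finite\<Rightarrow>real) s') \<le> Max (range f)"
proof -
  have "(\<Sum>s'\<in>UNIV. q s' * f s') \<le> (\<Sum>s'\<in>UNIV. q s' * Max (range f))"
    by (rule sum_mono) (simp add: assms(1) maxr_ge mult_left_mono)
  also have "\<dots> = Max (range f)" by (simp add: sum_distrib_right[symmetric] assms(2))
  finally show ?thesis .
qed

lemma stoch_ge:
  assumes "\<And>s'. 0 \<le> q s'" "(\<Sum>s'\<in>UNIV. q s') = 1"
  shows "Min (range f) \<le> (\<Sum>s'\<in>UNIV. q s' * (f::'s::finite\<Rightarrow>real) s')"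
proof -
  have "(\<Sum>s'\<in>UNIV. q s' * Min (range f)) \<le> (\<Sum>s'\<in>UNIV. q s' * f s')"
    by (rule sum_mono) (simp add: assms(1) minr_le mult_left_mono)
  moreover have "(\<Sum>s'\<in>UNIV. q s' * Min (range f)) = Min (range f)" by (simp add: sum_distrib_right[symmetric] assms(2))
  ultimately show ?thesis by simp
qed

lemma delta1: "(\<Sum>s'\<in>(UNIV::'s::finite set). (if s = s' then 1 else 0) * (f s'::real)) = f s"
proof -
  have "(\<Sum>s'\<in>(UNIV::'s set). (if s = s' then 1 else 0) * f s') = (\<Sum>s'\<in>UNIV. if s' = s then f s' else 0)"
    by (rule sum.cong) auto
  then show ?thesis by simp
qed

lemma delta2: "(\<Sum>s'\<in>(UNIV::'s::finite set). (f s'::real) * (if s' = s then 1 else 0)) = f s"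
proof -
  have "(\<Sum>s'\<in>(UNIV::'s set). f s' * (if s' = s then 1 else 0)) = (\<Sum>s'\<in>UNIV. if s' = s then f s' else 0)"
    by (rule sum.cong) auto
  then show ?thesis by simp
qed

lemma prodP_nonneg: "is_mdp p g \<Longrightarrow> 0 \<le> prodP p sg t s s'"
  by (induction t arbitrary: s') (auto simp: is_mdp_def intro!: sum_nonneg)

lemma prodP_sum: "is_mdp p g \<Longrightarrow> (\<Sum>s'\<in>UNIV. prodP p sg t s s') = 1"
proof (induction t)
  case 0 then show ?case by simp
next
  case (Suc t)
  have "(\<Sum>s''\<in>UNIV. prodP p sg (Suc t) s s'') = (\<Sum>s'\<in>UNIV. \<Sum>s''\<in>UNIV. prodP p sg t s s' * p s' (sg t s') s'')"
    by (simp only: prodP.simps) (rule sum.swap)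
  also have "\<dots> = (\<Sum>s'\<in>UNIV. prodP p sg t s s' * (\<Sum>s''\<in>UNIV. p s' (sg t s') s''))"
    by (simp add: sum_distrib_left)
  also have "\<dots> = 1" using Suc by (simp add: is_mdp_def)
  finally show ?case .
qed

lemma prodP_shift: "prodP p sg (Suc t) s s'' = (\<Sum>s'\<in>UNIV. p s (sg 0 s) s' * prodP p (\<lambda>t. sg (Suc t)) t s' s'')"
proof (induction t arbitrary: s'')
  case 0
  then show ?case by (simp only: prodP.simps delta1 delta2)
next
  case (Suc t)
  have "prodP p sg (Suc (Suc t)) s s'' = (\<Sum>s'\<in>UNIV. prodP p sg (Suc t) s s' * p s' (sg (Suc t) s') s'')"
    by simp
  also have "\<dots> = (\<Sum>s'\<in>UNIV. (\<Sum>x\<in>UNIV. p s (sg 0 s) x * prodP p (\<lambda>t. sg (Suc t)) t x s') * p s' (sg (Suc t) s') s'')"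
    using Suc by simp
  also have "\<dots> = (\<Sum>x\<in>UNIV. p s (sg 0 s) x * (\<Sum>s'\<in>UNIV. prodP p (\<lambda>t. sg (Suc t)) t x s' * p s' (sg (Suc t) s') s''))"
  proof -
    have "(\<Sum>s'\<in>UNIV. (\<Sum>x\<in>UNIV. p s (sg 0 s) x * prodP p (\<lambda>t. sg (Suc t)) t x s') * p s' (sg (Suc t) s') s'')
      = (\<Sum>s'\<in>UNIV. \<Sum>x\<in>UNIV. p s (sg 0 s) x * (prodP p (\<lambda>t. sg (Suc t)) t x s' * p s' (sg (Suc t) s') s''))"
      by (simp add: sum_distrib_right mult.assoc)
    also have "\<dots> = (\<Sum>x\<in>UNIV. \<Sum>s'\<in>UNIV. p s (sg 0 s) x * (prodP p (\<lambda>t. sg (Suc t)) t x s' * p s' (sg (Suc t) s') s''))"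
      by (rule sum.swap)
    also have "\<dots> = (\<Sum>x\<in>UNIV. p s (sg 0 s) x * (\<Sum>s'\<in>UNIV. prodP p (\<lambda>t. sg (Suc t)) t x s' * p s' (sg (Suc t) s') s''))"
      by (simp add: sum_distrib_left)
    finally show ?thesis .
  qed
  also have "\<dots> = (\<Sum>x\<in>UNIV. p s (sg 0 s) x * prodP p (\<lambda>t. sg (Suc t)) (Suc t) x s'')"
    by simp
  finally show ?case .
qed

definition vterm where
  "vterm r p g sg s t = g ^ t * (\<Sum>s'\<in>UNIV. prodP p sg t s s' * r s' (sg t s'))"

lemma vterm_summable:
  assumes mdp: "is_mdp p g"
  shows "summable (vterm r p g sg s)"
proof -
  define R where "R = (\<Sum>s\<in>UNIV. \<Sum>a\<in>UNIV. \<bar>r s a\<bar>)"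
  have rR: "\<bar>r s a\<bar> \<le> R" for s a
  proof -
    have "\<bar>r s a\<bar> \<le> (\<Sum>a\<in>UNIV. \<bar>r s a\<bar>)" by (rule member_le_sum) auto
    also have "\<dots> \<le> R" unfolding R_def by (rule member_le_sum[where f="\<lambda>s. \<Sum>a\<in>UNIV. \<bar>r s a\<bar>"]) (auto intro: sum_nonneg)
    finally show ?thesis .
  qed
  have g: "0 \<le> g" "g < 1" using mdp by (auto simp: is_mdp_def)
  have b: "norm (vterm r p g sg s t) \<le> R * g ^ t" for t
  proof -
    have "\<bar>\<Sum>s'\<in>UNIV. prodP p sg t s s' * r s' (sg t s')\<bar> \<le> (\<Sum>s'\<in>UNIV. prodP p sg t s s' * R)"
      by (rule order_trans[OF sum_abs]) (auto intro!: sum_mono simp: abs_mult prodP_nonneg[OF mdp] mult_left_mono rR)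
    also have "\<dots> = R" by (simp add: sum_distrib_right[symmetric] prodP_sum[OF mdp])
    finally have "\<bar>\<Sum>s'\<in>UNIV. prodP p sg t s s' * r s' (sg t s')\<bar> \<le> R" .
    then have "g ^ t * \<bar>\<Sum>s'\<in>UNIV. prodP p sg t s s' * r s' (sg t s')\<bar> \<le> g ^ t * R"
      using g by (simp add: mult_left_mono)
    then show ?thesis using g by (simp add: vterm_def abs_mult mult.commute)
  qed
  show ?thesis
    by (rule summable_comparison_test[OF _ summable_mult[OF summable_geometric]]) (use b g in auto)
qed

lemma value_step:
  assumes mdp: "is_mdp p g"
  shows "value_ns r p g sg = T_pol r p g (sg 0) (value_ns r p g (\<lambda>t. sg (Suc t)))"
proof
  fix s
  let ?sg' = "\<lambda>t. sg (Suc t)"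
  have vs: "value_ns r p g sg' x = suminf (vterm r p g sg' x)" for sg' x
    by (simp add: value_ns_def vterm_def[abs_def])
  have h: "vterm r p g sg s (Suc t) = g * (\<Sum>s'\<in>UNIV. p s (sg 0 s) s' * vterm r p g ?sg' s' t)" for t
  proof -
    have "vterm r p g sg s (Suc t) = g ^ Suc t * (\<Sum>s''\<in>UNIV. (\<Sum>s'\<in>UNIV. p s (sg 0 s) s' * prodP p ?sg' t s' s'') * r s'' (sg (Suc t) s''))"
      by (simp add: vterm_def prodP_shift[of p sg t s] del: prodP.simps)
    also have "\<dots> = g ^ Suc t * (\<Sum>s''\<in>UNIV. \<Sum>s'\<in>UNIV. p s (sg 0 s) s' * (prodP p ?sg' t s' s'' * r s'' (?sg' t s'')))"
      by (simp add: sum_distrib_right mult.assoc)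
    also have "\<dots> = g ^ Suc t * (\<Sum>s'\<in>UNIV. \<Sum>s''\<in>UNIV. p s (sg 0 s) s' * (prodP p ?sg' t s' s'' * r s'' (?sg' t s'')))"
      by (subst sum.swap) (rule refl)
    also have "\<dots> = g * (\<Sum>s'\<in>UNIV. p s (sg 0 s) s' * vterm r p g ?sg' s' t)"
      by (simp add: vterm_def sum_distrib_left mult_ac)
    finally show ?thesis .
  qed
  have "value_ns r p g sg s = vterm r p g sg s 0 + (\<Sum>t. vterm r p g sg s (Suc t))"
    using suminf_split_head[OF vterm_summable[OF mdp]] vs by simp
  also have "vterm r p g sg s 0 = r s (sg 0 s)"
    by (simp only: vterm_def prodP.simps delta1 power_0 mult_1)
  also have "(\<Sum>t. vterm r p g sg s (Suc t)) = (\<Sum>t. g * (\<Sum>s'\<in>UNIV. p s (sg 0 s) s' * vterm r p g ?sg' s' t))"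
    using h by simp
  also have "\<dots> = g * (\<Sum>t. (\<Sum>s'\<in>UNIV. p s (sg 0 s) s' * vterm r p g ?sg' s' t))"
    by (rule suminf_mult) (auto intro!: summable_sum summable_mult vterm_summable[OF mdp])
  also have "(\<Sum>t. (\<Sum>s'\<in>UNIV. p s (sg 0 s) s' * vterm r p g ?sg' s' t)) = (\<Sum>s'\<in>UNIV. (\<Sum>t. p s (sg 0 s) s' * vterm r p g ?sg' s' t))"
    by (rule suminf_sum) (auto intro!: summable_mult vterm_summable[OF mdp])
  also have "\<dots> = (\<Sum>s'\<in>UNIV. p s (sg 0 s) s' * value_ns r p g ?sg' s')"
    by (simp add: vs suminf_mult vterm_summable[OF mdp])
  finally show "value_ns r p g sg s = T_pol r p g (sg 0) (value_ns r p g ?sg') s"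
    by (simp add: T_pol_def)
qed

fun Cc where
  "Cc r p g sg 0 u = u"
| "Cc r p g sg (Suc n) u = Cc r p g sg n (T_pol r p g (sg n) u)"

lemma value_iter:
  assumes mdp: "is_mdp p g"
  shows "value_ns r p g sg = Cc r p g sg n (value_ns r p g (\<lambda>t. sg (t + n)))"
proof (induction n)
  case 0 then show ?case by simp
next
  case (Suc n)
  have "value_ns r p g (\<lambda>t. sg (t + n)) = T_pol r p g (sg n) (value_ns r p g (\<lambda>t. sg (t + Suc n)))"
    using value_step[OF mdp, of r "\<lambda>t. sg (t + n)"] by simp
  with Suc show ?case by simp
qed


lemma Tpol_diff:
  "T_pol r p g q u s - T_pol r p g q u' s = g * (\<Sum>s'\<in>UNIV. p s (q s) s' * (u s' - u' s'))"
  by (simp add: T_pol_def right_diff_distrib sum_subtractf)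

lemma Tpol_diff_le:
  assumes mdp: "is_mdp p g"
  shows "T_pol r p g q u s - T_pol r p g q u' s \<le> g * Max (range (\<lambda>s. u s - u' s))"
  unfolding Tpol_diff using mdp
  by (intro mult_left_mono stoch_le) (auto simp: is_mdp_def)

lemma Tpol_diff_ge:
  assumes mdp: "is_mdp p g"
  shows "g * Min (range (\<lambda>s. u s - u' s)) \<le> T_pol r p g q u s - T_pol r p g q u' s"
  unfolding Tpol_diff using mdp
  by (intro mult_left_mono stoch_ge) (auto simp: is_mdp_def)

lemma Cc_diff_le:
  assumes mdp: "is_mdp p g"
  shows "Cc r p g sg n u s - Cc r p g sg n u' s \<le> g ^ n * Max (range (\<lambda>s. u s - u' s))"
proof (induction n arbitrary: u u' s)
  case 0 then show ?case by (simp add: maxr_ge)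
next
  case (Suc n)
  have g: "0 \<le> g" using mdp by (simp add: is_mdp_def)
  have "Max (range (\<lambda>s. T_pol r p g (sg n) u s - T_pol r p g (sg n) u' s)) \<le> g * Max (range (\<lambda>s. u s - u' s))"
    by (rule maxr_le) (rule Tpol_diff_le[OF mdp])
  then have "g ^ n * Max (range (\<lambda>s. T_pol r p g (sg n) u s - T_pol r p g (sg n) u' s)) \<le> g ^ n * (g * Max (range (\<lambda>s. u s - u' s)))"
    using g by (simp add: mult_left_mono)
  with Suc[where u="T_pol r p g (sg n) u" and u'="T_pol r p g (sg n) u'" and s=s] show ?case by (simp add: mult_ac)
qed

lemma Cc_diff_ge:
  assumes mdp: "is_mdp p g"
  shows "g ^ n * Min (range (\<lambda>s. u s - u' s)) \<le> Cc r p g sg n u s - Cc r p g sg n u' s"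
proof (induction n arbitrary: u u' s)
  case 0 then show ?case by (simp add: minr_le)
next
  case (Suc n)
  have g: "0 \<le> g" using mdp by (simp add: is_mdp_def)
  have "g * Min (range (\<lambda>s. u s - u' s)) \<le> Min (range (\<lambda>s. T_pol r p g (sg n) u s - T_pol r p g (sg n) u' s))"
    by (rule minr_ge) (rule Tpol_diff_ge[OF mdp])
  then have "g ^ n * (g * Min (range (\<lambda>s. u s - u' s))) \<le> g ^ n * Min (range (\<lambda>s. T_pol r p g (sg n) u s - T_pol r p g (sg n) u' s))"
    using g by (simp add: mult_left_mono)
  with Suc[where u="T_pol r p g (sg n) u" and u'="T_pol r p g (sg n) u'" and s=s] show ?case by (simp add: mult_ac)
qed

lemma Topt_set: "{T_pol r p g pol u s |pol. True} = range (\<lambda>pol. T_pol r p g pol u s)"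
  by auto

lemma Topt_ge: "T_pol r p g q u s \<le> T_opt r p g u (s::'s::finite)"
  unfolding T_opt_def Topt_set by (rule Max_ge) auto

lemma Topt_att: "\<exists>q. T_opt r p g u (s::'s::finite) = T_pol r p g (q::'s \<Rightarrow> 'a::finite) u s"
proof -
  have "T_opt r p g u s \<in> range (\<lambda>pol::'s\<Rightarrow>'a. T_pol r p g pol u s)"
    unfolding T_opt_def Topt_set by (rule Max_in) auto
  then show ?thesis by auto
qed

lemma Topt_diff_le:
  assumes mdp: "is_mdp p g"
  shows "T_opt r p g u s - T_opt r p g u' s \<le> g * Max (range (\<lambda>s. u s - u' s))"
proof -
  obtain q where q: "T_opt r p g u s = T_pol r p g q u s" using Topt_att by blast
  have "T_pol r p g q u' s \<le> T_opt r p g u' s" by (rule Topt_ge)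
  with q Tpol_diff_le[OF mdp, of r q u s u'] show ?thesis by linarith
qed

lemma Cc_le_vstar:
  assumes mdp: "is_mdp p g" and vs: "T_opt r p g vstar = vstar"
  shows "Cc r p g sg n vstar s \<le> vstar s"
proof (induction n arbitrary: s)
  case 0 then show ?case by simp
next
  case (Suc n)
  have g: "0 \<le> g" using mdp by (simp add: is_mdp_def)
  have le: "T_pol r p g (sg n) vstar s' \<le> vstar s'" for s'
    using Topt_ge[of r p g "sg n" vstar s'] vs by simp
  have "0 \<le> Min (range (\<lambda>s. vstar s - T_pol r p g (sg n) vstar s))"
    by (rule minr_ge) (use le in auto)
  then have "0 \<le> g ^ n * Min (range (\<lambda>s. vstar s - T_pol r p g (sg n) vstar s))"
    using g by simp
  with Cc_diff_ge[OF mdp, where n=n and u=vstar and u'="T_pol r p g (sg n) vstar" and r=r and sg=sg and s=s] Suc[of s]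
  show ?case by simp
qed

lemma geo_rec:
  "(\<Sum>i\<in>{1..Suc j}. (g::real) ^ (Suc j - i) * f i) = g * (\<Sum>i\<in>{1..j}. g ^ (j - i) * f i) + f (Suc j)"
proof -
  have "(\<Sum>i\<in>{1..j}. g ^ (Suc j - i) * f i) = g * (\<Sum>i\<in>{1..j}. g ^ (j - i) * f i)"
    unfolding sum_distrib_left by (rule sum.cong) (auto simp: Suc_diff_le)
  then show ?thesis by simp
qed


theorem theorem2:
  fixes r :: "'s::finite \<Rightarrow> 'a::finite \<Rightarrow> real"
    and p :: "'s \<Rightarrow> 'a \<Rightarrow> 's \<Rightarrow> real"
    and g :: real
    and vstar :: "'s \<Rightarrow> real"
    and v :: "nat \<Rightarrow> 's \<Rightarrow> real"
    and pol :: "nat \<Rightarrow> 's \<Rightarrow> 'a"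
    and eps :: "nat \<Rightarrow> 's \<Rightarrow> real"
    and k m :: nat
  assumes mdp: "is_mdp p g"
    and vstar: "T_opt r p g vstar = vstar"
    and k: "1 \<le> k" and m: "1 \<le> m" "m \<le> k"
    and greedy: "\<And>j. j < k \<Longrightarrow> greedy r p g (pol (Suc j)) (v j)"
    and avi: "\<And>j. Suc j < k \<Longrightarrow> v (Suc j) = (\<lambda>s. T_pol r p g (pol (Suc j)) (v j) s + eps (Suc j) s)"
  shows "supnorm (\<lambda>s. vstar s - value_ns r p g (periodic_pol pol k m) s)
    \<le> 1 / (1 - g ^ m) *
       ((g - g ^ k) / (1 - g) *
          (if k = 1 then 0 else Max {span (eps j) | j. 1 \<le> j \<and> j < k})
        + g ^ k * span (\<lambda>s. vstar s - v 0 s))"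
proof -
  have g0: "0 \<le> g" and g1: "g < 1" using mdp by (auto simp: is_mdp_def)
  have gm: "g ^ m < 1" using g0 g1 m by (simp add: power_less_one_iff)
  have gm0: "0 \<le> g ^ m" using g0 by simp
  define sg where "sg = periodic_pol pol k m"
  define v' where "v' j = (if j < k then v j else T_pol r p g (pol k) (v (k - 1)))" for j
  define e where "e i = (\<lambda>s. v' i s - T_pol r p g (pol i) (v' (i - 1)) s)" for i
  define a where "a i = Max (range (e i))" for i
  define c where "c i = Min (range (e i))" for i
  define M where "M j = Max (range (\<lambda>s. vstar s - v' j s))" for j
  define L where "L j = Min (range (\<lambda>s. vstar s - v' j s))" for j
  define A where "A j = (\<Sum>i\<in>{1..j}. g ^ (j - i) * a i)" for j
  define C where "C j = (\<Sum>i\<in>{1..j}. g ^ (j - i) * c i)" for j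
  define D where "D j = (\<Sum>i\<in>{1..j}. g ^ (j - i) * (a i - c i))" for j
  define E where "E = (if k = 1 then 0 else Max {span (eps j) | j. 1 \<le> j \<and> j < k})"
  have vstar_s: "T_opt r p g vstar s = vstar s" for s using vstar by simp
  have v'eq: "v' (Suc j) s = T_pol r p g (pol (Suc j)) (v' j) s + e (Suc j) s" for j s
    by (simp add: e_def)
  have gr: "T_pol r p g (pol (Suc j)) (v' j) s = T_opt r p g (v' j) s" if "j < k" for j s
    using greedy[OF that] that by (simp add: v'_def greedy_def)
  have e_eps: "e (Suc j) = eps (Suc j)" if "Suc j < k" for j
    using that avi[OF that] by (auto simp: e_def v'_def)
  have ek: "e k = (\<lambda>s. 0)" using k by (simp add: e_def v'_def)
  have ak: "a k = 0" and ck: "c k = 0" by (simp_all add: a_def c_def ek)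
  have Mb: "j \<le> k \<Longrightarrow> M j \<le> g ^ j * M 0 - C j" for j
  proof (induction j)
    case 0 then show ?case by (simp add: C_def)
  next
    case (Suc j)
    have "M (Suc j) \<le> g * M j - c (Suc j)"
      unfolding M_def[of "Suc j"]
    proof (rule maxr_le)
      fix s
      have "vstar s - v' (Suc j) s = T_opt r p g vstar s - T_opt r p g (v' j) s - e (Suc j) s"
        using vstar_s[of s] v'eq[of j s] gr[of j s] Suc.prems by simp
      also have "\<dots> \<le> g * M j - c (Suc j)"
        using Topt_diff_le[OF mdp, of r vstar s "v' j"] minr_le[of "e (Suc j)" s]
        unfolding M_def c_def by linarith
      finally show "vstar s - v' (Suc j) s \<le> g * M j - c (Suc j)" .
    qed
    also have "\<dots> \<le> g * (g ^ j * M 0 - C j) - c (Suc j)"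
      using Suc g0 by (simp add: mult_left_mono)
    also have "\<dots> = g ^ Suc j * M 0 - C (Suc j)"
      unfolding C_def geo_rec by (simp add: algebra_simps)
    finally show ?case .
  qed
  have Lb: "j \<le> k \<Longrightarrow> g ^ j * L 0 - A j \<le> L j" for j
  proof (induction j)
    case 0 then show ?case by (simp add: A_def)
  next
    case (Suc j)
    have "g ^ Suc j * L 0 - A (Suc j) = g * (g ^ j * L 0 - A j) - a (Suc j)"
      unfolding A_def geo_rec by (simp add: algebra_simps)
    also have "\<dots> \<le> g * L j - a (Suc j)"
      using Suc g0 by (simp add: mult_left_mono)
    also have "\<dots> \<le> L (Suc j)"
      unfolding L_def[of "Suc j"]
    proof (rule minr_ge)
      fix s
      have "vstar s - v' (Suc j) s \<ge> T_pol r p g (pol (Suc j)) vstar s - T_pol r p g (pol (Suc j)) (v' j) s - e (Suc j) s"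
        using vstar_s[of s] v'eq[of j s] Topt_ge[of r p g "pol (Suc j)" vstar s] by simp
      moreover have "g * L j - a (Suc j) \<le> T_pol r p g (pol (Suc j)) vstar s - T_pol r p g (pol (Suc j)) (v' j) s - e (Suc j) s"
        using Tpol_diff_ge[OF mdp, of vstar "v' j" r "pol (Suc j)" s] maxr_ge[of "e (Suc j)" s]
        unfolding L_def a_def by linarith
      ultimately show "g * L j - a (Suc j) \<le> vstar s - v' (Suc j) s" by linarith
    qed
    finally show ?case .
  qed
  have chain: "n \<le> m \<Longrightarrow> v' k s - Cc r p g sg n (v' (k - n)) s \<le> A k - g ^ n * A (k - n)" for n s
  proof (induction n arbitrary: s)
    case 0 then show ?case by simp
  next
    case (Suc n)
    define i where "i = k - n"
    have i1: "i = Suc (k - Suc n)" using Suc.prems m unfolding i_def by linarith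
    have sgn: "sg n = pol i" using Suc.prems unfolding sg_def periodic_pol_def i_def by simp
    have Ti: "T_pol r p g (pol i) (v' (k - Suc n)) = (\<lambda>s. v' i s - e i s)"
      using i1 by (auto simp: e_def)
    have "Cc r p g sg (Suc n) (v' (k - Suc n)) s = Cc r p g sg n (\<lambda>s. v' i s - e i s) s"
      using sgn Ti by simp
    moreover have "Cc r p g sg n (v' i) s - Cc r p g sg n (\<lambda>s. v' i s - e i s) s \<le> g ^ n * a i"
      using Cc_diff_le[OF mdp, where n=n and u="v' i" and u'="\<lambda>s. v' i s - e i s" and r=r and sg=sg and s=s]
      by (simp add: a_def)
    moreover have "v' k s - Cc r p g sg n (v' i) s \<le> A k - g ^ n * A i"
      using Suc by (simp add: i_def)
    moreover have "A i = g * A (k - Suc n) + a i"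
      unfolding A_def using geo_rec[of g "k - Suc n" a] i1 by simp
    ultimately show ?case by (simp add: algebra_simps)
  qed
  define B where "B = g ^ k * (M 0 - L 0) + (A k - C k)"
  have bB: "vstar s - Cc r p g sg m vstar s \<le> B" for s
  proof -
    have c1: "v' k s - Cc r p g sg m (v' (k - m)) s \<le> A k - g ^ m * A (k - m)"
      using chain[of m s] by simp
    have c2: "g ^ m * L (k - m) \<le> Cc r p g sg m vstar s - Cc r p g sg m (v' (k - m)) s"
      using Cc_diff_ge[OF mdp, where n=m and u=vstar and u'="v' (k - m)" and r=r and sg=sg and s=s]
      by (simp add: L_def)
    have c3: "vstar s - v' k s \<le> g ^ k * M 0 - C k"
      using Mb[of k] maxr_ge[of "\<lambda>s. vstar s - v' k s" s] by (simp add: M_def)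
    have c4: "g ^ m * (g ^ (k - m) * L 0 - A (k - m)) \<le> g ^ m * L (k - m)"
      using Lb[of "k - m"] gm0 by (simp add: mult_left_mono)
    have pk: "g ^ m * g ^ (k - m) = g ^ k" using m by (simp add: power_add[symmetric])
    have "g ^ m * (g ^ (k - m) * L 0 - A (k - m)) = g ^ k * L 0 - g ^ m * A (k - m)"
      using pk by (simp add: algebra_simps)
    with c4 have c5: "g ^ k * L 0 - g ^ m * A (k - m) \<le> g ^ m * L (k - m)" by simp
    from c1 c2 c3 c5 show ?thesis unfolding B_def by (simp add: algebra_simps)
  qed
  have b0: "0 \<le> vstar s - Cc r p g sg m vstar s" for s
    using Cc_le_vstar[OF mdp vstar] by simp
  define vp where "vp = value_ns r p g sg"
  have sgper: "(\<lambda>t. sg (t + m)) = sg" by (rule ext) (simp add: sg_def periodic_pol_def)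
  have vpfix: "Cc r p g sg m vp = vp"
    using value_iter[OF mdp, of r sg m] sgper by (simp add: vp_def)
  define x where "x s = vstar s - vp s" for s
  have xs: "x s = (vstar s - Cc r p g sg m vstar s) + (Cc r p g sg m vstar s - Cc r p g sg m vp s)" for s
    unfolding x_def using vpfix by simp
  have xup: "x s \<le> B + g ^ m * Max (range x)" for s
    using xs[of s] bB[of s] Cc_diff_le[OF mdp, where n=m and u=vstar and u'=vp and r=r and sg=sg and s=s]
    unfolding x_def by simp
  have xlo: "g ^ m * Min (range x) \<le> x s" for s
    using xs[of s] b0[of s] Cc_diff_ge[OF mdp, where n=m and u=vstar and u'=vp and r=r and sg=sg and s=s]
    unfolding x_def by simp
  have "Max (range x) \<le> B + g ^ m * Max (range x)" by (rule maxr_le) (rule xup)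
  then have Mx: "Max (range x) * (1 - g ^ m) \<le> B" by (simp add: algebra_simps)
  have "g ^ m * Min (range x) \<le> Min (range x)" by (rule minr_ge) (rule xlo)
  then have "0 \<le> Min (range x) * (1 - g ^ m)" by (simp add: algebra_simps)
  then have mx0: "0 \<le> Min (range x)" using gm by (simp add: zero_le_mult_iff)
  have xnn: "0 \<le> x s" for s using mx0 minr_le[of x s] by linarith
  have AC: "A k - C k = D k" by (simp add: A_def C_def D_def sum_subtractf right_diff_distrib)
  have spanE: "a (Suc j) - c (Suc j) \<le> E" if "Suc j < k" for j
  proof -
    have "a (Suc j) - c (Suc j) = span (eps (Suc j))"
      using e_eps[OF that] by (simp add: a_def c_def span_def)
    also have "\<dots> \<le> Max {span (eps j) | j. 1 \<le> j \<and> j < k}"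
    proof (rule Max_ge)
      have "{span (eps j) | j. 1 \<le> j \<and> j < k} = (\<lambda>j. span (eps j)) ` {1..<k}" by auto
      then show "finite {span (eps j) | j. 1 \<le> j \<and> j < k}" by simp
      show "span (eps (Suc j)) \<in> {span (eps j) | j. 1 \<le> j \<and> j < k}" using that by auto
    qed
    finally show ?thesis using that by (simp add: E_def)
  qed
  have Db: "j < k \<Longrightarrow> D j * (1 - g) \<le> E * (1 - g ^ j)" for j
  proof (induction j)
    case 0 then show ?case by (simp add: D_def)
  next
    case (Suc j)
    have DS: "D (Suc j) = g * D j + (a (Suc j) - c (Suc j))" unfolding D_def by (rule geo_rec)
    have "g * (D j * (1 - g)) \<le> g * (E * (1 - g ^ j))" using Suc g0 by (simp add: mult_left_mono)
    moreover have "(a (Suc j) - c (Suc j)) * (1 - g) \<le> E * (1 - g)"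
      using spanE[OF Suc.prems] g1 by (simp add: mult_right_mono)
    ultimately show ?case unfolding DS by (simp add: algebra_simps)
  qed
  have k1: "k = Suc (k - 1)" using k by simp
  have Dk: "D k = g * D (k - 1)"
    using geo_rec[of g "k - 1" "\<lambda>i. a i - c i"] k1 ak ck unfolding D_def by simp
  have "D (k - 1) * (1 - g) \<le> E * (1 - g ^ (k - 1))" using Db[of "k - 1"] k by simp
  then have "g * (D (k - 1) * (1 - g)) \<le> g * (E * (1 - g ^ (k - 1)))" using g0 by (simp add: mult_left_mono)
  moreover have "g * g ^ (k - 1) = g ^ k" using k1 by (metis power_Suc)
  ultimately have "D k * (1 - g) \<le> E * (g - g ^ k)" unfolding Dk by (simp add: algebra_simps)
  then have DkE: "D k \<le> (g - g ^ k) / (1 - g) * E" using g1 by (simp add: pos_le_divide_eq field_simps)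
  have sp: "span (\<lambda>s. vstar s - v 0 s) = M 0 - L 0" using k by (simp add: span_def M_def L_def v'_def)
  define Q where "Q = (g - g ^ k) / (1 - g) * E + g ^ k * span (\<lambda>s. vstar s - v 0 s)"
  have BQ: "B \<le> Q" unfolding B_def Q_def sp AC using DkE by simp
  have "Max (range x) \<le> Q / (1 - g ^ m)" using Mx BQ gm by (simp add: pos_le_divide_eq)
  moreover have "supnorm x \<le> Max (range x)"
    unfolding supnorm_def by (rule maxr_le) (simp add: xnn maxr_ge)
  ultimately have "supnorm x \<le> Q / (1 - g ^ m)" by (rule order_trans[rotated])
  then have "supnorm x \<le> 1 / (1 - g ^ m) * Q" by simp
  then show ?thesis unfolding Q_def E_def x_def vp_def sg_def .
qed

end
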